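(* Fix an agent $i$ with $\theta_i^*\in\Theta_i$ and $\sigma^2>0$. If $p_i(t)\sim\mathcal N(0,\sigma^2)$ and $x_i(t)=x_i^*(p_i(t))$, then there exists $\delta>0$ such that \[ \mathbb E\big[\xi_i(t)\xi_i(t)^\top\delta_i(t)\big]\succeq\delta\,\mathbb I_d. \]
   Context: $\mathcal X_i\subset\mathbb R$ is a compact interval with nonempty interior; $\Phi(x)=(x,x^2,\dots,x^d)^\top$; $\Theta_i=\{\theta\in\mathbb R^d: m_i\le\theta^\top\nabla^2\Phi(x)\le M_i\ \forall x\in\mathcal X_i\}$ for constants $0<m_i\le M_i$. The best response to incentive $p$ is $x_i^*(p)=\arg\min_{x\in\mathcal X_i}(\theta_i^{*\top}\Phi(x)+px)$. $\xi_i(t)=\nabla\Phi(x_i(t))$ and $\delta_i(t)=\mathbf 1\{x_i(t)\in\operatorname{int}\mathcal X_i\}$. *)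

theory Defs
  imports "HOL-Probability.Probability"
begin

text \<open>Vectors in R^d are represented as functions nat => real, using indices 0..d-1.
  Component k (0-based) of Phi(x) is x^(k+1).\<close>

definition Phi :: "nat \<Rightarrow> real \<Rightarrow> (nat \<Rightarrow> real)" where
  "Phi d x = (\<lambda>k. if k < d then x ^ (k + 1) else 0)"

definition gradPhi :: "nat \<Rightarrow> real \<Rightarrow> (nat \<Rightarrow> real)" where
  "gradPhi d x = (\<lambda>k. if k < d then real (k + 1) * x ^ k else 0)"

definition hessPhi :: "nat \<Rightarrow> real \<Rightarrow> (nat \<Rightarrow> real)" where
  "hessPhi d x = (\<lambda>k. if k < d then real ((k + 1) * k) * x ^ (k - 1) else 0)"

definition dotd :: "nat \<Rightarrow> (nat \<Rightarrow> real) \<Rightarrow> (nat \<Rightarrow> real) \<Rightarrow> real" where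
  "dotd d u v = (\<Sum>k<d. u k * v k)"

definition Theta :: "nat \<Rightarrow> real set \<Rightarrow> real \<Rightarrow> real \<Rightarrow> (nat \<Rightarrow> real) set" where
  "Theta d X m M = {\<theta>. \<forall>x\<in>X. m \<le> dotd d \<theta> (hessPhi d x) \<and> dotd d \<theta> (hessPhi d x) \<le> M}"

definition best_response :: "nat \<Rightarrow> real set \<Rightarrow> (nat \<Rightarrow> real) \<Rightarrow> real \<Rightarrow> real" where
  "best_response d X \<theta> p =
     (THE x. x \<in> X \<and> (\<forall>y\<in>X. dotd d \<theta> (Phi d x) + p * x \<le> dotd d \<theta> (Phi d y) + p * y))"

definition loewner_ge_scaled_id :: "nat \<Rightarrow> (nat \<Rightarrow> nat \<Rightarrow> real) \<Rightarrow> real \<Rightarrow> bool" where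
  "loewner_ge_scaled_id d A c =
     (\<forall>v :: nat \<Rightarrow> real. 0 \<le> (\<Sum>j<d. \<Sum>k<d. v j * (A j k - (if j = k then c else 0)) * v k))"

end

theory Submission imports Defs "HOL-Computational_Algebra.Polynomial" "HOL-Analysis.Analysis" begin

lemma qf_pd:
  fixes A :: "nat \<Rightarrow> nat \<Rightarrow> real" and d :: nat
  assumes pos: "\<And>v. (\<exists>j<d. v j \<noteq> 0) \<Longrightarrow> 0 < (\<Sum>j<d. \<Sum>k<d. v j * A j k * v k)"
  shows "\<exists>\<delta>>0. \<forall>v. \<delta> * (\<Sum>j<d. (v j)^2) \<le> (\<Sum>j<d. \<Sum>k<d. v j * A j k * v k)"
proof (cases "d = 0")
  case True then show ?thesis by (intro exI[of _ 1]) auto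
next
  case False
  define Q where "Q = (\<lambda>v::nat\<Rightarrow>real. \<Sum>j<d. \<Sum>k<d. v j * A j k * v k)"
  define T where "T = product_topology (\<lambda>_::nat. euclideanreal) {..<d}"
  define K where "K = PiE {..<d} (\<lambda>_. {-1..1::real})"
  define S where "S = {v \<in> topspace T. (\<Sum>j<d. (v j)^2) \<in> {1}}"
  have cQ: "continuous_map T euclideanreal Q"
    unfolding Q_def T_def
    by (intro continuous_map_sum continuous_map_real_mult continuous_map_product_projection continuous_map_const[THEN iffD2]) auto
  have cN: "continuous_map T euclideanreal (\<lambda>v. \<Sum>j<d. (v j)^2)"
    unfolding T_def power2_eq_square
    by (intro continuous_map_sum continuous_map_real_mult continuous_map_product_projection) auto
  have clS: "closedin T S" unfolding S_def
    by (rule closedin_continuous_map_preimage[OF cN]) auto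
  have cK: "compactin T K" unfolding T_def K_def
    by (subst compactin_PiE) auto
  have SK: "S \<subseteq> K"
  proof
    fix v assume "v \<in> S"
    hence v: "v \<in> PiE {..<d} (\<lambda>_. UNIV)" "(\<Sum>j<d. (v j)^2) = 1" unfolding S_def T_def by auto
    have "\<bar>v j\<bar> \<le> 1" if "j < d" for j
    proof -
      have "(v j)^2 \<le> (\<Sum>j<d. (v j)^2)"
        using that by (intro member_le_sum) auto
      hence "\<bar>v j\<bar>^2 \<le> 1^2" using v by simp
      thus ?thesis using abs_le_square_iff by (metis abs_one power2_abs)
    qed
    then show "v \<in> K" using v unfolding K_def by (auto simp: PiE_def abs_le_iff)
  qed
  have cS: "compactin T S" by (rule closed_compactin[OF cK SK clS])
  have "compactin euclideanreal (Q ` S)" by (rule image_compactin[OF cS cQ])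
  hence cQS: "compact (Q ` S)" by simp
  define e0 where "e0 = restrict (\<lambda>j. if j = 0 then 1 else (0::real)) {..<d}"
  have "(\<Sum>j<d. (e0 j)^2) = (\<Sum>j<d. if j = 0 then 1 else 0)"
    unfolding e0_def by (intro sum.cong) auto
  also have "\<dots> = 1" using False by (simp add: sum.delta)
  finally have e0s: "(\<Sum>j<d. (e0 j)^2) = 1" .
  have "e0 \<in> topspace T" unfolding T_def e0_def by simp
  hence e0S: "e0 \<in> S" using e0s unfolding S_def by simp
  obtain w where wS: "w \<in> S" and wmin: "\<forall>u\<in>S. Q w \<le> Q u"
    using compact_attains_inf[OF cQS] e0S by blast
  have "\<exists>j<d. w j \<noteq> 0"
  proof (rule ccontr)
    assume "\<not> ?thesis"
    hence "(\<Sum>j<d. (w j)^2) = 0" by simp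
    thus False using wS unfolding S_def by simp
  qed
  hence mu: "0 < Q w" using pos unfolding Q_def by blast
  show ?thesis
  proof (intro exI[of _ "Q w"] conjI allI mu)
    fix v :: "nat \<Rightarrow> real"
    define s where "s = (\<Sum>j<d. (v j)^2)"
    show "Q w * (\<Sum>j<d. (v j)^2) \<le> (\<Sum>j<d. \<Sum>k<d. v j * A j k * v k)"
    proof (cases "s = 0")
      case True
      hence "\<forall>j<d. v j = 0" unfolding s_def by (simp add: sum_nonneg_eq_0_iff)
      then show ?thesis unfolding s_def[symmetric] True by simp
    next
      case F: False
      have "s \<ge> 0" unfolding s_def by (intro sum_nonneg) simp
      hence s0: "s > 0" using F by simp
      define u where "u = restrict (\<lambda>j. v j / sqrt s) {..<d}"
      have sq: "sqrt s * sqrt s = s" using s0 by simp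
      have sp: "sqrt s > 0" using s0 by simp
      have uT: "u \<in> topspace T" unfolding T_def u_def by simp
      have "(\<Sum>j<d. (u j)^2) = (\<Sum>j<d. (v j)^2 / s)"
      proof (rule sum.cong[OF refl])
        fix j assume "j \<in> {..<d}"
        hence "u j = v j / sqrt s" unfolding u_def by simp
        thus "(u j)^2 = (v j)^2 / s" using sq by (simp add: power2_eq_square)
      qed
      also have "\<dots> = s / s" unfolding s_def by (rule sum_divide_distrib[symmetric])
      also have "\<dots> = 1" using s0 by simp
      finally have "u \<in> S" unfolding S_def using uT by simp
      hence "Q w \<le> Q u" using wmin by blast
      also have "Q u = Q v / s"
        unfolding Q_def sum_divide_distrib
      proof (intro sum.cong[OF refl])
        fix j k assume jk: "j \<in> {..<d}" "k \<in> {..<d}"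
        have "u j = v j / sqrt s" "u k = v k / sqrt s" using jk unfolding u_def by simp_all
        show "u j * A j k * u k = v j * A j k * v k / s"
        proof -
          have "u j * A j k * u k = (v j * A j k * v k) / (sqrt s * sqrt s)"
            using \<open>u j = v j / sqrt s\<close> \<open>u k = v k / sqrt s\<close> by simp
          thus ?thesis using sq by simp
        qed
      qed
      finally have "Q w \<le> Q v / s" .
      hence "Q w * s \<le> Q v" using s0 by (simp add: pos_le_divide_eq)
      thus ?thesis unfolding Q_def s_def .
    qed
  qed
qed

definition fp :: "nat \<Rightarrow> (nat \<Rightarrow> real) \<Rightarrow> real \<Rightarrow> real" where
  "fp d \<theta> x = dotd d \<theta> (Phi d x)"
definition fp1 :: "nat \<Rightarrow> (nat \<Rightarrow> real) \<Rightarrow> real \<Rightarrow> real" where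
  "fp1 d \<theta> x = dotd d \<theta> (gradPhi d x)"
definition fp2 :: "nat \<Rightarrow> (nat \<Rightarrow> real) \<Rightarrow> real \<Rightarrow> real" where
  "fp2 d \<theta> x = dotd d \<theta> (hessPhi d x)"

lemma fp_deriv: "(fp d \<theta> has_real_derivative fp1 d \<theta> x) (at x)"
proof -
  have e1: "fp d \<theta> = (\<lambda>x. \<Sum>k<d. \<theta> k * x ^ (k+1))"
    unfolding fp_def dotd_def Phi_def by (intro ext sum.cong) auto
  have e2: "fp1 d \<theta> x = (\<Sum>k<d. \<theta> k * (real (k+1) * x ^ k))"
    unfolding fp1_def dotd_def gradPhi_def by (intro sum.cong) auto
  show ?thesis unfolding e1 e2
    by (intro DERIV_sum DERIV_cmult DERIV_pow[THEN DERIV_cong]) simp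
qed

lemma fp1_deriv: "(fp1 d \<theta> has_real_derivative fp2 d \<theta> x) (at x)"
proof -
  have e1: "fp1 d \<theta> = (\<lambda>x. \<Sum>k<d. \<theta> k * (real (k+1) * x ^ k))"
    unfolding fp1_def dotd_def gradPhi_def by (intro ext sum.cong) auto
  have e2: "fp2 d \<theta> x = (\<Sum>k<d. \<theta> k * (real (k+1) * (real k * x ^ (k - 1))))"
    unfolding fp2_def dotd_def hessPhi_def
    by (intro sum.cong refl) (simp only: if_True lessThan_iff of_nat_mult mult.assoc One_nat_def)
  show ?thesis unfolding e1 e2
    by (intro DERIV_sum DERIV_cmult DERIV_pow[THEN DERIV_cong]) (simp add: mult.commute)
qed

context
  fixes d :: nat and \<theta> :: "nat \<Rightarrow> real" and a b m :: real
  assumes ab: "a < b" and m0: "0 < m" and hm: "\<forall>x\<in>{a..b}. m \<le> fp2 d \<theta> x"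
begin

lemma fp1_incr:
  assumes "a \<le> x" "x < y" "y \<le> b"
  shows "fp1 d \<theta> x + m * (y - x) \<le> fp1 d \<theta> y"
proof -
  obtain z where z: "x < z" "z < y" "fp1 d \<theta> y - fp1 d \<theta> x = (y - x) * fp2 d \<theta> z"
    using MVT2[OF assms(2), of "fp1 d \<theta>" "fp2 d \<theta>"] fp1_deriv by blast
  have "m \<le> fp2 d \<theta> z" using hm z assms by auto
  hence "m * (y - x) \<le> (y - x) * fp2 d \<theta> z" using assms by (simp add: mult.commute mult_left_mono)
  thus ?thesis using z by linarith
qed

lemma fp1_strict:
  assumes "a \<le> x" "x < y" "y \<le> b"
  shows "fp1 d \<theta> x < fp1 d \<theta> y"
proof -
  have "0 < m * (y - x)" using m0 assms by simp
  thus ?thesis using fp1_incr[OF assms] by linarith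
qed

definition G :: "real \<Rightarrow> real \<Rightarrow> real" where
  "G p x = fp d \<theta> x + p * x"

lemma G_deriv: "(G p has_real_derivative fp1 d \<theta> x + p) (at x)"
  unfolding G_def by (auto intro!: derivative_eq_intros fp_deriv)

lemma G_cont: "continuous_on S (G p)"
  by (meson DERIV_isCont G_deriv continuous_at_imp_continuous_on)

lemma G_mvt:
  assumes "x < y"
  shows "\<exists>z>x. z < y \<and> G p y - G p x = (y - x) * (fp1 d \<theta> z + p)"
  using MVT2[OF assms, of "G p" "\<lambda>z. fp1 d \<theta> z + p"] G_deriv by blast

lemma min_unique:
  assumes "x1 \<in> {a..b}" "x2 \<in> {a..b}"
    and h1: "\<forall>z\<in>{a..b}. G p x1 \<le> G p z" and h2: "\<forall>z\<in>{a..b}. G p x2 \<le> G p z"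
  shows "x1 = x2"
proof (rule ccontr)
  assume ne: "x1 \<noteq> x2"
  have key: False if uv: "u < v" and "u \<in> {a..b}" "v \<in> {a..b}" "\<forall>z\<in>{a..b}. G p u \<le> G p z"
      "\<forall>z\<in>{a..b}. G p v \<le> G p z" for u v
  proof -
    have "G p u \<le> G p v" using that(3,4) by blast
    moreover have "G p v \<le> G p u" using that(2,5) by blast
    ultimately have eq: "G p u = G p v" by simp
    obtain z where z: "u < z" "z < v" "G p v - G p u = (v - u) * (fp1 d \<theta> z + p)"
      using G_mvt[OF uv] by blast
    have z0: "fp1 d \<theta> z + p = 0" using z eq uv by simp
    obtain w where w: "u < w" "w < z" "G p z - G p u = (z - u) * (fp1 d \<theta> w + p)"
      using G_mvt[OF z(1)] by blast
    have "fp1 d \<theta> w < fp1 d \<theta> z" using fp1_strict[of w z] w z that by auto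
    hence "(z - u) * (fp1 d \<theta> w + p) < 0" using z0 w by (intro mult_pos_neg) auto
    hence "G p z < G p u" using w by linarith
    moreover have "z \<in> {a..b}" using z that by auto
    ultimately show False using that(4) by fastforce
  qed
  show False
  proof (cases "x1 < x2")
    case True thus ?thesis using key[of x1 x2] assms by blast
  next
    case False hence "x2 < x1" using ne by auto
    thus ?thesis using key[of x2 x1] assms by blast
  qed
qed

lemma min_exists: "\<exists>x\<in>{a..b}. \<forall>z\<in>{a..b}. G p x \<le> G p z"
  using continuous_attains_inf[of "{a..b}" "G p"] ab G_cont by auto

lemma br_eq: "best_response d {a..b} \<theta> p = (THE x. x \<in> {a..b} \<and> (\<forall>z\<in>{a..b}. G p x \<le> G p z))"
  unfolding best_response_def G_def fp_def by simp

lemma br_prop: "best_response d {a..b} \<theta> p \<in> {a..b} \<and>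
   (\<forall>z\<in>{a..b}. G p (best_response d {a..b} \<theta> p) \<le> G p z)"
  unfolding br_eq
proof (rule theI')
  show "\<exists>!x. x \<in> {a..b} \<and> (\<forall>z\<in>{a..b}. G p x \<le> G p z)"
    using min_exists min_unique by blast
qed

lemma br_is: "x \<in> {a..b} \<Longrightarrow> \<forall>z\<in>{a..b}. G p x \<le> G p z \<Longrightarrow> best_response d {a..b} \<theta> p = x"
  using br_prop min_unique by blast

lemma br_antimono:
  assumes "p1 \<le> p2"
  shows "best_response d {a..b} \<theta> p2 \<le> best_response d {a..b} \<theta> p1"
proof (rule ccontr)
  let ?x1 = "best_response d {a..b} \<theta> p1" and ?x2 = "best_response d {a..b} \<theta> p2"
  assume "\<not> ?x2 \<le> ?x1"
  hence lt: "?x1 < ?x2" by simp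
  have "G p1 ?x1 \<le> G p1 ?x2" "G p2 ?x2 \<le> G p2 ?x1" using br_prop[of p1] br_prop[of p2] by auto
  hence "p1 * ?x1 + p2 * ?x2 \<le> p1 * ?x2 + p2 * ?x1" unfolding G_def by simp
  hence "(p2 - p1) * (?x2 - ?x1) \<le> 0" by (simp add: algebra_simps)
  moreover have "p1 \<noteq> p2 \<Longrightarrow> 0 < (p2 - p1) * (?x2 - ?x1)" using lt assms by simp
  ultimately have "p1 = p2" by linarith
  thus False using lt by simp
qed

lemma br_measurable: "(\<lambda>p. best_response d {a..b} \<theta> p) \<in> borel_measurable borel"
proof -
  have "mono (\<lambda>p. best_response d {a..b} \<theta> (- p))"
    by (intro monoI br_antimono) simp
  hence "(\<lambda>p. best_response d {a..b} \<theta> (- p)) \<in> borel_measurable borel"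
    by (rule borel_measurable_mono)
  hence "(\<lambda>p. best_response d {a..b} \<theta> (- p)) \<circ> uminus \<in> borel_measurable borel"
    by (intro measurable_comp[where N=borel]) auto
  thus ?thesis by (simp add: o_def)
qed

lemma br_interior:
  assumes "best_response d {a..b} \<theta> p \<in> {a<..<b}"
  shows "fp1 d \<theta> (best_response d {a..b} \<theta> p) + p = 0"
proof -
  let ?x = "best_response d {a..b} \<theta> p"
  define e where "e = min (?x - a) (b - ?x)"
  have e: "0 < e" using assms unfolding e_def by auto
  show ?thesis
  proof (rule DERIV_local_min[OF G_deriv e])
    show "\<forall>y. \<bar>?x - y\<bar> < e \<longrightarrow> G p ?x \<le> G p y"
      using br_prop[of p] unfolding e_def by (auto simp: abs_if split: if_splits)
  qed
qed

lemma br_in: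
  assumes "- fp1 d \<theta> b < p" "p < - fp1 d \<theta> a"
  shows "best_response d {a..b} \<theta> p \<in> {a<..<b}"
proof -
  have "\<forall>x. a \<le> x \<and> x \<le> b \<longrightarrow> isCont (\<lambda>x. fp1 d \<theta> x + p) x"
  proof (intro allI impI)
    fix x have c: "isCont (fp1 d \<theta>) x" using DERIV_isCont fp1_deriv by blast
    show "isCont (\<lambda>x. fp1 d \<theta> x + p) x" by (intro continuous_intros c)
  qed
  then obtain x0 where x0: "a \<le> x0" "x0 \<le> b" "fp1 d \<theta> x0 + p = 0"
    using IVT[of "\<lambda>x. fp1 d \<theta> x + p" a 0 b] assms ab by auto
  have x0i: "x0 \<in> {a<..<b}" using x0 assms by (cases "x0 = a"; cases "x0 = b") auto
  have "\<forall>z\<in>{a..b}. G p x0 \<le> G p z"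
  proof
    fix z assume z: "z \<in> {a..b}"
    show "G p x0 \<le> G p z"
    proof (cases "x0 < z")
      case True
      then obtain w where w: "x0 < w" "w < z" "G p z - G p x0 = (z - x0) * (fp1 d \<theta> w + p)"
        using G_mvt by blast
      have "fp1 d \<theta> x0 < fp1 d \<theta> w" using fp1_strict[of x0 w] w x0 z by auto
      hence "0 < (z - x0) * (fp1 d \<theta> w + p)" using w x0 True by simp
      thus ?thesis using w by linarith
    next
      case False
      show ?thesis
      proof (cases "z < x0")
        case True
        then obtain w where w: "z < w" "w < x0" "G p x0 - G p z = (x0 - z) * (fp1 d \<theta> w + p)"
          using G_mvt by blast
        have "fp1 d \<theta> w < fp1 d \<theta> x0" using fp1_strict[of w x0] w x0 z by auto
        hence "(x0 - z) * (fp1 d \<theta> w + p) < 0" using w x0 True by (intro mult_pos_neg) auto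
        thus ?thesis using w by linarith
      qed (use False in simp)
    qed
  qed
  hence "best_response d {a..b} \<theta> p = x0" using br_is x0 by auto
  thus ?thesis using x0i by simp
qed

end

lemma loewner_from:
  assumes "\<forall>v. \<delta> * (\<Sum>j<d. (v j)^2) \<le> (\<Sum>j<d. \<Sum>k<d. v j * A j k * v k)"
  shows "loewner_ge_scaled_id d A \<delta>"
  unfolding loewner_ge_scaled_id_def
proof
  fix v :: "nat \<Rightarrow> real"
  have e: "(\<Sum>k<d. v j * (A j k - (if j = k then \<delta> else 0)) * v k)
      = (\<Sum>k<d. v j * A j k * v k) - \<delta> * (v j)^2" if "j < d" for j
  proof -
    have "(\<Sum>k<d. v j * (A j k - (if j = k then \<delta> else 0)) * v k)
       = (\<Sum>k<d. v j * A j k * v k - (if j = k then \<delta> * (v j)^2 else 0))"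
      by (intro sum.cong refl) (auto simp: algebra_simps power2_eq_square)
    also have "\<dots> = (\<Sum>k<d. v j * A j k * v k) - \<delta> * (v j)^2"
      using that by (simp add: sum_subtractf sum.delta)
    finally show ?thesis .
  qed
  have "(\<Sum>j<d. \<Sum>k<d. v j * (A j k - (if j = k then \<delta> else 0)) * v k)
     = (\<Sum>j<d. \<Sum>k<d. v j * A j k * v k) - \<delta> * (\<Sum>j<d. (v j)^2)"
    by (simp add: e sum_subtractf sum_distrib_left)
  thus "0 \<le> (\<Sum>j<d. \<Sum>k<d. v j * (A j k - (if j = k then \<delta> else 0)) * v k)"
    using assms by simp
qed

lemma gradPhi_bound:
  assumes "x \<in> {a..b}"
  shows "\<bar>gradPhi d x j\<bar> \<le> real (j+1) * (\<bar>a\<bar> + \<bar>b\<bar>) ^ j"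
proof -
  have "\<bar>x\<bar> \<le> \<bar>a\<bar> + \<bar>b\<bar>" using assms by auto
  hence "\<bar>x\<bar> ^ j \<le> (\<bar>a\<bar> + \<bar>b\<bar>) ^ j" by (intro power_mono) auto
  thus ?thesis unfolding gradPhi_def
    by (auto simp: abs_mult power_abs intro!: mult_left_mono)
qed

theorem lemma2:
  fixes d :: nat and a b m M \<sigma>2 :: real and \<theta> :: "nat \<Rightarrow> real"
    and M\<^sub>\<Omega> :: "'w measure" and p :: "'w \<Rightarrow> real"
  assumes "a < b"
    and "0 < m" and "m \<le> M"
    and "\<theta> \<in> Theta d {a..b} m M"
    and "0 < \<sigma>2"
    and "prob_space M\<^sub>\<Omega>"
    and "distributed M\<^sub>\<Omega> lborel p (normal_density 0 (sqrt \<sigma>2))"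
  shows "\<exists>\<delta>>0. loewner_ge_scaled_id d
           (\<lambda>j k. prob_space.expectation M\<^sub>\<Omega>
              (\<lambda>\<omega>. let x = best_response d {a..b} \<theta> (p \<omega>) in
                   gradPhi d x j * gradPhi d x k * indicator (interior {a..b}) x))
           \<delta>"
proof -
  interpret P: prob_space M\<^sub>\<Omega> by fact
  note ab = assms(1) and m0 = assms(2)
  have hm: "\<forall>x\<in>{a..b}. m \<le> fp2 d \<theta> x"
    using assms(4) unfolding Theta_def fp2_def by auto
  define br where "br = best_response d {a..b} \<theta>"
  define H where "H j k y = gradPhi d (br y) j * gradPhi d (br y) k * indicator {a<..<b} (br y)" for j k y
  define A where "A j k = P.expectation (\<lambda>\<omega>. H j k (p \<omega>))" for j k
  have dist: "distr M\<^sub>\<Omega> lborel p = density lborel (\<lambda>x. ennreal (normal_density 0 (sqrt \<sigma>2) x))"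
    and pm: "p \<in> borel_measurable M\<^sub>\<Omega>"
    using assms(7) unfolding distributed_def by auto
  have brm[measurable]: "br \<in> borel_measurable borel"
    unfolding br_def by (rule br_measurable[OF ab m0 hm])
  have brab: "br y \<in> {a..b}" for y
    using br_prop[OF ab m0 hm] unfolding br_def by blast
  have Hm[measurable]: "(\<lambda>y. H j k y) \<in> borel_measurable borel" for j k
    unfolding H_def gradPhi_def by measurable
  have Hint: "integrable M\<^sub>\<Omega> (\<lambda>\<omega>. H j k (p \<omega>))" for j k
  proof (rule P.integrable_const_bound[where B="(real (j+1) * (\<bar>a\<bar> + \<bar>b\<bar>) ^ j) * (real (k+1) * (\<bar>a\<bar> + \<bar>b\<bar>) ^ k)"])
    show "AE x in M\<^sub>\<Omega>. norm (H j k (p x)) \<le> (real (j+1) * (\<bar>a\<bar> + \<bar>b\<bar>) ^ j) * (real (k+1) * (\<bar>a\<bar> + \<bar>b\<bar>) ^ k)"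
    proof (intro AE_I2)
      fix x
      have 1: "\<bar>gradPhi d (br (p x)) j\<bar> \<le> real (j+1) * (\<bar>a\<bar> + \<bar>b\<bar>) ^ j"
        "\<bar>gradPhi d (br (p x)) k\<bar> \<le> real (k+1) * (\<bar>a\<bar> + \<bar>b\<bar>) ^ k"
        using gradPhi_bound brab by auto
      have "\<bar>H j k (p x)\<bar> \<le> \<bar>gradPhi d (br (p x)) j\<bar> * \<bar>gradPhi d (br (p x)) k\<bar>"
        unfolding H_def by (auto simp: abs_mult indicator_def)
      also have "\<dots> \<le> (real (j+1) * (\<bar>a\<bar> + \<bar>b\<bar>) ^ j) * (real (k+1) * (\<bar>a\<bar> + \<bar>b\<bar>) ^ k)"
        using 1 by (intro mult_mono) auto
      finally show "norm (H j k (p x)) \<le> (real (j+1) * (\<bar>a\<bar> + \<bar>b\<bar>) ^ j) * (real (k+1) * (\<bar>a\<bar> + \<bar>b\<bar>) ^ k)"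
        by simp
    qed
    show "(\<lambda>\<omega>. H j k (p \<omega>)) \<in> borel_measurable M\<^sub>\<Omega>"
      using pm by measurable
  qed
  define Zf where "Zf v y = (\<Sum>j<d. v j * gradPhi d (br y) j)^2 * indicator {a<..<b} (br y)" for v y
  have Zeq: "(\<Sum>j<d. \<Sum>k<d. v j * H j k y * v k) = Zf v y" for v y
  proof -
    have "Zf v y = (\<Sum>j<d. \<Sum>k<d. (v j * gradPhi d (br y) j) * (v k * gradPhi d (br y) k)) * indicator {a<..<b} (br y)"
      unfolding Zf_def power2_eq_square sum_product ..
    also have "\<dots> = (\<Sum>j<d. \<Sum>k<d. (v j * gradPhi d (br y) j) * (v k * gradPhi d (br y) k) * indicator {a<..<b} (br y))"
      by (simp add: sum_distrib_right)
    finally show ?thesis unfolding H_def by (simp add: mult_ac)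
  qed
  have Qeq: "(\<Sum>j<d. \<Sum>k<d. v j * A j k * v k) = P.expectation (\<lambda>\<omega>. Zf v (p \<omega>))" for v
  proof -
    have "(\<Sum>j<d. \<Sum>k<d. v j * A j k * v k) = (\<Sum>j<d. \<Sum>k<d. P.expectation (\<lambda>\<omega>. v j * H j k (p \<omega>) * v k))"
      unfolding A_def by (intro sum.cong refl) (simp only: integral_mult_left_zero integral_mult_right_zero)
    also have "\<dots> = (\<Sum>j<d. P.expectation (\<lambda>\<omega>. \<Sum>k<d. v j * H j k (p \<omega>) * v k))"
    proof (rule sum.cong[OF refl])
      fix j
      have int: "integrable M\<^sub>\<Omega> (\<lambda>\<omega>. v j * H j k (p \<omega>) * v k)" for k
        by (intro integrable_mult_left integrable_mult_right Hint)
      show "(\<Sum>k<d. P.expectation (\<lambda>\<omega>. v j * H j k (p \<omega>) * v k)) = P.expectation (\<lambda>\<omega>. \<Sum>k<d. v j * H j k (p \<omega>) * v k)"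
        using int by simp
    qed
    also have "\<dots> = P.expectation (\<lambda>\<omega>. \<Sum>j<d. \<Sum>k<d. v j * H j k (p \<omega>) * v k)"
      using Hint by (simp add: integrable_sum)
    also have "\<dots> = P.expectation (\<lambda>\<omega>. Zf v (p \<omega>))"
      using Zeq by simp
    finally show ?thesis .
  qed
  have pos: "0 < (\<Sum>j<d. \<Sum>k<d. v j * A j k * v k)" if vnz: "\<exists>j<d. v j \<noteq> 0" for v
  proof -
    obtain j0 where j0: "j0 < d" "v j0 \<noteq> 0" using vnz by blast
    define PP where "PP = (\<Sum>j<d. monom (v j * real (j+1)) j)"
    have polyPP: "poly PP x = (\<Sum>j<d. v j * gradPhi d x j)" for x
      unfolding PP_def poly_sum poly_monom gradPhi_def by (intro sum.cong refl) auto
    have "coeff PP j0 = (\<Sum>j<d. if j = j0 then v j * real (j+1) else 0)"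
      unfolding PP_def coeff_sum coeff_monom by (intro sum.cong refl)
    also have "\<dots> = v j0 * real (j0+1)" using j0 by (simp add: sum.delta')
    finally have "coeff PP j0 \<noteq> 0" using j0 by simp
    hence "PP \<noteq> 0" by auto
    hence finR: "finite {x. poly PP x = 0}" by (rule poly_roots_finite)
    define F where "F = (\<lambda>r. - fp1 d \<theta> r) ` {x. poly PP x = 0}"
    have finF: "finite F" unfolding F_def using finR by simp
    define I where "I = {- fp1 d \<theta> b <..< - fp1 d \<theta> a}"
    have Zm[measurable]: "Zf v \<in> borel_measurable borel"
      unfolding Zf_def gradPhi_def by measurable
    have Zint: "integrable M\<^sub>\<Omega> (\<lambda>\<omega>. Zf v (p \<omega>))"
    proof -
      have "integrable M\<^sub>\<Omega> (\<lambda>\<omega>. \<Sum>j<d. \<Sum>k<d. v j * H j k (p \<omega>) * v k)"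
        using Hint by (simp add: integrable_sum)
      thus ?thesis unfolding Zeq .
    qed
    have Znn: "0 \<le> Zf v y" for y unfolding Zf_def by simp
    show ?thesis unfolding Qeq
    proof (rule ccontr)
      assume "\<not> 0 < P.expectation (\<lambda>\<omega>. Zf v (p \<omega>))"
      moreover have "0 \<le> P.expectation (\<lambda>\<omega>. Zf v (p \<omega>))"
        by (intro integral_nonneg_AE) (simp add: Znn)
      ultimately have "P.expectation (\<lambda>\<omega>. Zf v (p \<omega>)) = 0" by simp
      hence "AE \<omega> in M\<^sub>\<Omega>. Zf v (p \<omega>) = 0"
        using integral_nonneg_eq_0_iff_AE[OF Zint] Znn by simp
      hence "AE y in distr M\<^sub>\<Omega> lborel p. Zf v y = 0"
        using pm by (subst AE_distr_iff) auto
      hence "AE y in density lborel (\<lambda>x. ennreal (normal_density 0 (sqrt \<sigma>2) x)). Zf v y = 0"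
        unfolding dist .
      hence "AE y in lborel. 0 < ennreal (normal_density 0 (sqrt \<sigma>2) y) \<longrightarrow> Zf v y = 0"
        by (subst (asm) AE_density) auto
      hence ae1: "AE y in lborel. Zf v y = 0"
        using normal_density_pos[of "sqrt \<sigma>2" 0] assms(5) by simp
      have ae2: "AE y in lborel. y \<notin> F"
        by (rule AE_not_in[OF finite_imp_null_set_lborel[OF finF]])
      have "AE y in lborel. y \<notin> I"
        using ae1 ae2
      proof eventually_elim
        case (elim y)
        show "y \<notin> I"
        proof
          assume yI: "y \<in> I"
          have bi: "br y \<in> {a<..<b}" using br_in[OF ab m0 hm] yI unfolding I_def br_def by auto
          have fy: "fp1 d \<theta> (br y) + y = 0" using br_interior[OF ab m0 hm bi[unfolded br_def]]
            unfolding br_def .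
          have "(\<Sum>j<d. v j * gradPhi d (br y) j)^2 = 0" using elim(1) bi unfolding Zf_def by simp
          hence "poly PP (br y) = 0" unfolding polyPP by simp
          hence "y \<in> F" unfolding F_def using fy by (auto intro!: image_eqI[where x="br y"])
          thus False using elim(2) by simp
        qed
      qed
      hence "emeasure lborel I = 0"
        by (subst (asm) AE_iff_measurable[where N=I]) (auto simp: I_def)
      moreover have "fp1 d \<theta> a < fp1 d \<theta> b" using fp1_strict[OF ab m0 hm, of a b] ab by simp
      ultimately show False unfolding I_def by simp
    qed
  qed
  obtain \<delta> where \<delta>: "\<delta> > 0" "\<forall>v. \<delta> * (\<Sum>j<d. (v j)^2) \<le> (\<Sum>j<d. \<Sum>k<d. v j * A j k * v k)"
    using qf_pd[of d A] pos by blast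
  have "loewner_ge_scaled_id d A \<delta>" by (rule loewner_from[OF \<delta>(2)])
  moreover have "A = (\<lambda>j k. prob_space.expectation M\<^sub>\<Omega>
              (\<lambda>\<omega>. let x = best_response d {a..b} \<theta> (p \<omega>) in
                   gradPhi d x j * gradPhi d x k * indicator (interior {a..b}) x))"
    unfolding A_def H_def br_def by (simp add: Let_def)
  ultimately show ?thesis using \<delta>(1) by auto
qed

end
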